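(* Suppose $k_i^{(m)},h_i^{(m)}\in\mathbb{C}$ ($m,i\in\mathbb{Z}$) satisfy $$(i-n)k_i^{(m)}=(2m-n-i)h_{n-m+i}^{(n)}\quad\text{for all }m,n,i\in\mathbb{Z}.$$ Then there is $\lambda\in\mathbb{C}$ such that $k_i^{(m)}=h_i^{(m)}=\delta_{m,i}\lambda$ for all $m,i\in\mathbb{Z}$.
   Context: $\delta_{m,i}$ denotes the Kronecker delta. *)

theory Defs
  imports Complex_Main
begin

end

theory Submission
  imports Defs
begin

theorem proposition2p1:
  fixes k h :: "int \<Rightarrow> int \<Rightarrow> complex"
  assumes "\<And>m n i. of_int (i - n) * k m i = of_int (2*m - n - i) * h n (n - m + i)"
  shows "\<exists>c::complex. \<forall>m i. k m i = (if m = i then c else 0) \<and> h m i = (if m = i then c else 0)"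
proof -
  have H0: "h n j = 0" if "j \<noteq> n" for n j
  proof -
    have "of_int (n - n) * k (2*n - j) n = of_int (2*(2*n-j) - n - n) * h n (n - (2*n-j) + n)"
      by (rule assms)
    moreover have "n - (2*n-j) + n = j" by simp
    moreover have "(of_int (2*(2*n-j) - n - n)::complex) \<noteq> 0" using that by simp
    ultimately show ?thesis by simp
  qed
  have K0: "k m i = 0" if "i \<noteq> m" for m i
  proof -
    have "of_int (i - (i+1)) * k m i = of_int (2*m - (i+1) - i) * h (i+1) ((i+1) - m + i)"
      by (rule assms)
    moreover have "h (i+1) ((i+1) - m + i) = 0" using that by (intro H0) simp
    ultimately show ?thesis by simp
  qed
  have KH: "k m m = h n n" if "m \<noteq> n" for m n
  proof -
    have "of_int (m - n) * k m m = of_int (2*m - n - m) * h n (n - m + m)"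
      by (rule assms)
    moreover have "(of_int (m - n)::complex) \<noteq> 0" using that by simp
    moreover have "(2*m - n - m) = m - n" "n - m + m = n" by simp_all
    ultimately have "of_int (m - n) * k m m = of_int (m - n) * h n n" by metis
    with \<open>(of_int (m - n)::complex) \<noteq> 0\<close> show ?thesis by simp
  qed
  have HH: "h n n = h 0 0" for n
  proof -
    define m where "m = \<bar>n\<bar> + 1"
    have "m \<noteq> 0" "m \<noteq> n" unfolding m_def by auto
    then show ?thesis using KH[of m n] KH[of m 0] by simp
  qed
  have KK: "k m m = h 0 0" for m
  proof -
    have "m \<noteq> m + 1" by simp
    then show ?thesis using KH[of m "m+1"] HH[of "m+1"] by simp
  qed
  show ?thesis
  proof (rule exI[of _ "h 0 0"], intro allI conjI)
    fix m i
    show "k m i = (if m = i then h 0 0 else 0)"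
      using K0[of i m] KK[of m] by (cases "m = i") auto
    show "h m i = (if m = i then h 0 0 else 0)"
      using H0[of i m] HH[of m] by (cases "m = i") auto
  qed
qed

end
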